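(* Let $p\ge2$, $n\ge1$, $\sigma>0$, $a>0$, let $\beta\in\mathbb{R}^p$ be fixed with support $S_0=\{j:\beta_j\ne0\}$ of size $k\ge1$. Let $X\in\mathbb{R}^{n\times p}$ have independent mean-zero entries with $\mathrm{E}e^{tX_{\ell j}}\le e^{t^2/2}$ for all $t$, let $\epsilon$ be independent of $X$ with independent mean-zero entries satisfying $\mathrm{E}e^{t\epsilon_\ell}\le e^{\sigma^2t^2/2}$, and $Y=X\beta+\epsilon$. Fix $\lambda_{max}\ge\lambda_{min}>0$, $\lambda>0$, and let $\mathcal{E}_{cond}$ be the event that some eigenvalue of $X_{S_0}^{\mathrm T}X_{S_0}/n$ lies outside $[\lambda_{min},\lambda_{max}]$ or $\|\epsilon\|^2/n>\sigma^2\lambda$. Let $\tau=\sqrt{2(1+a)\log p}$, let $\hat\beta_{ls}$ be the least squares coefficient vector of $Y$ regressed on $X_{S_0}$, $c_0=1/\sqrt{\lambda_{min}}$, and $\mathcal{E}_{ls}=\{\|\hat\beta_{ls}-\beta_{S_0}\|_\infty>\sigma c_0\tau/\sqrt n\}$. Then $\mathbb{P}(\mathcal{E}_{ls}\cap\mathcal{E}_{cond}^c)\le2k/p^{1+a}$.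
   Context: $X_{S_0}$ is the submatrix of columns indexed by $S_0$ and $\beta_{S_0}$ the corresponding subvector. *)

theory Defs
  imports "HOL-Probability.Probability"
begin

definition eigenvalue_on :: "nat set \<Rightarrow> (nat \<Rightarrow> nat \<Rightarrow> real) \<Rightarrow> real \<Rightarrow> bool" where
  "eigenvalue_on S A \<mu> \<longleftrightarrow>
     (\<exists>v :: nat \<Rightarrow> real. (\<forall>j. j \<notin> S \<longrightarrow> v j = 0) \<and> (\<exists>j\<in>S. v j \<noteq> 0) \<and>
        (\<forall>i\<in>S. (\<Sum>j\<in>S. A i j * v j) = \<mu> * v i))"

definition rss :: "nat \<Rightarrow> nat set \<Rightarrow> (nat \<Rightarrow> nat \<Rightarrow> real) \<Rightarrow> (nat \<Rightarrow> real) \<Rightarrow> (nat \<Rightarrow> real) \<Rightarrow> real" where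
  "rss n S Xd Y b = (\<Sum>l<n. (Y l - (\<Sum>j\<in>S. Xd l j * b j))\<^sup>2)"

definition is_ls :: "nat \<Rightarrow> nat set \<Rightarrow> (nat \<Rightarrow> nat \<Rightarrow> real) \<Rightarrow> (nat \<Rightarrow> real) \<Rightarrow> (nat \<Rightarrow> real) \<Rightarrow> bool" where
  "is_ls n S Xd Y b \<longleftrightarrow> (\<forall>j. j \<notin> S \<longrightarrow> b j = 0) \<and>
     (\<forall>b'. (\<forall>j. j \<notin> S \<longrightarrow> b' j = 0) \<longrightarrow> rss n S Xd Y b \<le> rss n S Xd Y b')"

text \<open>The least squares coefficient vector (unique when the Gram matrix is invertible).\<close>
definition ls_coef :: "nat \<Rightarrow> nat set \<Rightarrow> (nat \<Rightarrow> nat \<Rightarrow> real) \<Rightarrow> (nat \<Rightarrow> real) \<Rightarrow> nat \<Rightarrow> real" where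
  "ls_coef n S Xd Y = (THE b. is_ls n S Xd Y b)"

end

theory Submission
  imports Defs Jordan_Normal_Form.Determinant
begin

lemma quad_expand:
  fixes A :: "nat \<Rightarrow> nat \<Rightarrow> real"
  assumes sym: "\<And>i j. i\<in>S \<Longrightarrow> j\<in>S \<Longrightarrow> A i j = A j i"
  shows "(\<Sum>i\<in>S. \<Sum>j\<in>S. A i j * (v i + t * g i) * (v j + t * g j)) =
     (\<Sum>i\<in>S. \<Sum>j\<in>S. A i j * v i * v j) + 2 * t * (\<Sum>i\<in>S. g i * (\<Sum>j\<in>S. A i j * v j))
     + t^2 * (\<Sum>i\<in>S. \<Sum>j\<in>S. A i j * g i * g j)"
proof -
  have sw: "(\<Sum>i\<in>S. \<Sum>j\<in>S. A i j * v i * g j) = (\<Sum>i\<in>S. g i * (\<Sum>j\<in>S. A i j * v j))"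
  proof -
    have "(\<Sum>i\<in>S. \<Sum>j\<in>S. A i j * v i * g j) = (\<Sum>j\<in>S. \<Sum>i\<in>S. A i j * v i * g j)"
      by (rule sum.swap)
    also have "\<dots> = (\<Sum>j\<in>S. g j * (\<Sum>i\<in>S. A j i * v i))"
      by (auto simp: sum_distrib_left sym intro!: sum.cong)
    finally show ?thesis .
  qed
  have "(\<Sum>i\<in>S. \<Sum>j\<in>S. A i j * (v i + t * g i) * (v j + t * g j)) =
     (\<Sum>i\<in>S. \<Sum>j\<in>S. A i j * v i * v j) + t * (\<Sum>i\<in>S. \<Sum>j\<in>S. A i j * v i * g j)
     + t * (\<Sum>i\<in>S. \<Sum>j\<in>S. A i j * g i * v j)
     + t^2 * (\<Sum>i\<in>S. \<Sum>j\<in>S. A i j * g i * g j)"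
    by (simp add: sum.distrib sum_distrib_left algebra_simps power2_eq_square)
  also have "(\<Sum>i\<in>S. \<Sum>j\<in>S. A i j * g i * v j) = (\<Sum>i\<in>S. g i * (\<Sum>j\<in>S. A i j * v j))"
    by (simp add: sum_distrib_left algebra_simps)
  finally show ?thesis using sw by simp
qed

lemma quad_zero:
  fixes A :: "nat \<Rightarrow> nat \<Rightarrow> real"
  assumes "finite S" "(\<Sum>i\<in>S. (y i)^2) = 0"
  shows "(\<Sum>i\<in>S. \<Sum>j\<in>S. A i j * y i * y j) = 0"
proof -
  have "\<forall>i\<in>S. y i = 0" using assms sum_nonneg_eq_0_iff[of S "\<lambda>i. (y i)^2"] by auto
  then show ?thesis by simp
qed

lemma quad_scale:
  fixes A :: "nat \<Rightarrow> nat \<Rightarrow> real"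
  shows "(\<Sum>i\<in>S. \<Sum>j\<in>S. A i j * (r * y i) * (r * y j)) = r^2 * (\<Sum>i\<in>S. \<Sum>j\<in>S. A i j * y i * y j)"
  by (simp add: sum_distrib_left algebra_simps power2_eq_square)

lemma rayleigh:
  fixes A :: "nat \<Rightarrow> nat \<Rightarrow> real"
  assumes fin: "finite S" and sym: "\<And>i j. i\<in>S \<Longrightarrow> j\<in>S \<Longrightarrow> A i j = A j i"
    and eig: "\<And>\<mu>. eigenvalue_on S A \<mu> \<Longrightarrow> c \<le> \<mu>"
  shows "c * (\<Sum>i\<in>S. (u i)^2) \<le> (\<Sum>i\<in>S. \<Sum>j\<in>S. A i j * u i * u j)"
proof (cases "S = {}")
  case True then show ?thesis by simp
next
  case False
  then obtain i0 where i0: "i0 \<in> S" by blast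
  define Q where "Q = (\<lambda>v::nat\<Rightarrow>real. \<Sum>i\<in>S. \<Sum>j\<in>S. A i j * v i * v j)"
  define N where "N = (\<lambda>v::nat\<Rightarrow>real. \<Sum>i\<in>S. (v i)^2)"
  define T where "T = product_topology (\<lambda>_. euclideanreal) S"
  define K where "K = {x \<in> topspace T. N x \<in> {1}}"
  have cN: "continuous_map T euclideanreal N"
    unfolding N_def T_def using fin
    by (intro continuous_map_sum continuous_map_real_pow continuous_map_product_projection) auto
  have cQ: "continuous_map T euclideanreal Q"
    unfolding Q_def T_def using fin
    by (intro continuous_map_sum continuous_map_real_mult continuous_map_product_projection) auto
  have clK: "closedin T K" unfolding K_def
    by (rule closedin_continuous_map_preimage[OF cN]) simp
  have cb: "compactin T (PiE S (\<lambda>_. {-1..1}))"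
    unfolding T_def by (simp add: compactin_PiE)
  have sub: "K \<subseteq> PiE S (\<lambda>_. {-1..1})"
  proof
    fix x assume x: "x \<in> K"
    then have xT: "x \<in> PiE S (\<lambda>_. UNIV)" and Nx: "N x = 1" unfolding K_def T_def by auto
    have "x i \<in> {-1..1}" if "i \<in> S" for i
    proof -
      have "(x i)^2 \<le> N x" unfolding N_def
        by (rule member_le_sum[OF that]) (auto simp: fin)
      then have "\<bar>x i\<bar> \<le> 1" using Nx abs_le_square_iff[of "x i" 1] by simp
      then show ?thesis by auto
    qed
    then show "x \<in> PiE S (\<lambda>_. {-1..1})" using xT by (auto simp: PiE_def)
  qed
  have cK: "compactin T K" by (rule closed_compactin[OF cb sub clK])
  have "compact (Q ` K)"
    using image_compactin[OF cK cQ] by simp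
  moreover have x0: "restrict (\<lambda>i. if i = i0 then 1 else 0) S \<in> K"
  proof -
    have "N (restrict (\<lambda>i. if i = i0 then 1 else 0) S) = (\<Sum>i\<in>S. (if i = i0 then 1 else 0))"
      unfolding N_def by (intro sum.cong) auto
    also have "\<dots> = 1" using i0 fin by simp
    finally show ?thesis unfolding K_def T_def by auto
  qed
  then have "Q ` K \<noteq> {}" by blast
  ultimately obtain m where m: "m \<in> Q ` K" "\<And>y. y \<in> Q ` K \<Longrightarrow> m \<le> y"
    using compact_attains_inf by metis
  then obtain v where v: "v \<in> K" "Q v = m" by blast
  have Nv: "N v = 1" using v unfolding K_def by auto
  have minK: "\<And>y. y \<in> K \<Longrightarrow> m \<le> Q y" using m by blast
  have Nnn: "\<And>y. 0 \<le> N y" unfolding N_def by (simp add: sum_nonneg)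
  have allQ: "m * N y \<le> Q y" for y
  proof (cases "N y = 0")
    case True
    then have "Q y = 0" unfolding Q_def N_def by (rule quad_zero[OF fin])
    then show ?thesis using True by simp
  next
    case False
    then have Np: "N y > 0" using Nnn[of y] by simp
    define r where "r = 1 / sqrt (N y)"
    have r2: "r^2 = 1 / N y" unfolding r_def using Np by (simp add: power_divide)
    define y' where "y' = restrict (\<lambda>i. r * y i) S"
    have "N y' = r^2 * N y" unfolding y'_def N_def
      by (simp add: sum_distrib_left power_mult_distrib)
    then have "N y' = 1" using r2 Np by simp
    then have "y' \<in> K" unfolding K_def T_def y'_def by auto
    then have "m \<le> Q y'" by (rule minK)
    also have "Q y' = r^2 * Q y" unfolding y'_def Q_def
      by (simp add: quad_scale)
    finally have "m \<le> Q y / N y" using r2 by simp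
    then show ?thesis using Np by (simp add: pos_le_divide_eq)
  qed
  define g where "g = (\<lambda>i. (\<Sum>j\<in>S. A i j * v j) - m * v i)"
  have Ng: "N g = 0"
  proof (rule ccontr)
    assume "N g \<noteq> 0"
    then have Ngp: "N g > 0" using Nnn[of g] by simp
    define C where "C = Q g - m * N g"
    define t where "t = - N g / (\<bar>C\<bar> + 1)"
    have "m * N (\<lambda>i. v i + t * g i) \<le> Q (\<lambda>i. v i + t * g i)" by (rule allQ)
    moreover have "Q (\<lambda>i. v i + t * g i) = m + 2 * t * (\<Sum>i\<in>S. g i * (\<Sum>j\<in>S. A i j * v j)) + t^2 * Q g"
      unfolding Q_def using quad_expand[OF sym] v(2) Q_def by simp
    moreover have "N (\<lambda>i. v i + t * g i) = 1 + 2 * t * (\<Sum>i\<in>S. g i * v i) + t^2 * N g"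
      using Nv unfolding N_def
      by (simp add: sum.distrib sum_distrib_left power2_eq_square algebra_simps)
    moreover have "(\<Sum>i\<in>S. g i * (\<Sum>j\<in>S. A i j * v j)) - m * (\<Sum>i\<in>S. g i * v i) = N g"
      unfolding N_def g_def by (simp add: sum_distrib_left sum_subtractf[symmetric] power2_eq_square algebra_simps)
    ultimately have "0 \<le> 2 * t * N g + t^2 * C"
      unfolding C_def by (simp add: algebra_simps)
    moreover have "2 * t * N g + t^2 * C < 0"
    proof -
      have d: "\<bar>C\<bar> + 1 > 0" by simp
      have "2 * t * N g + t^2 * C = t * (2 * N g + t * C)" by (simp add: power2_eq_square algebra_simps)
      moreover have "t < 0" unfolding t_def using Ngp d by (simp add: divide_neg_pos)
      moreover have "2 * N g + t * C > 0"
      proof -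
        have "\<bar>t * C\<bar> = N g * (\<bar>C\<bar> / (\<bar>C\<bar> + 1))" unfolding t_def using Ngp
          by (simp add: abs_mult abs_divide)
        also have "\<dots> \<le> N g * 1" using Ngp d by (intro mult_left_mono) auto
        finally show ?thesis using Ngp by linarith
      qed
      ultimately show ?thesis by (simp add: mult_neg_pos)
    qed
    ultimately show False by linarith
  qed
  have g0: "\<forall>i\<in>S. g i = 0" using Ng unfolding N_def
    using sum_nonneg_eq_0_iff[of S "\<lambda>i. (g i)^2"] fin by auto
  have "eigenvalue_on S A m"
    unfolding eigenvalue_on_def
  proof (intro exI[of _ "\<lambda>j. if j \<in> S then v j else 0"] conjI ballI allI impI)
    show "\<exists>j\<in>S. (if j \<in> S then v j else 0) \<noteq> 0"
    proof (rule ccontr)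
      assume "\<not> ?thesis"
      then have "N v = 0" unfolding N_def by auto
      then show False using Nv by simp
    qed
    fix i assume "i \<in> S"
    then show "(\<Sum>j\<in>S. A i j * (if j \<in> S then v j else 0)) = m * (if i \<in> S then v i else 0)"
      using g0 unfolding g_def by simp
  qed auto
  then have "c \<le> m" by (rule eig)
  then have "c * N u \<le> m * N u" using Nnn by (simp add: mult_right_mono)
  also have "\<dots> \<le> Q u" by (rule allQ)
  finally show ?thesis unfolding N_def Q_def .
qed

definition Gk :: "nat \<Rightarrow> (nat\<Rightarrow>nat) \<Rightarrow> (nat\<Rightarrow>nat\<Rightarrow>real) \<Rightarrow> nat \<Rightarrow> nat \<Rightarrow> real" where
  "Gk n s x i j = (\<Sum>l<n. x l (s i) * x l (s j)) / real n"
definition Gm :: "nat \<Rightarrow> (nat\<Rightarrow>nat) \<Rightarrow> nat \<Rightarrow> (nat\<Rightarrow>nat\<Rightarrow>real) \<Rightarrow> real mat" where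
  "Gm n s k x = Matrix.mat k k (\<lambda>(i,j). Gk n s x i j)"
definition Ad where "Ad n s k x = adj_mat (Gm n s k x)"
definition Dt where "Dt n s k x = Determinant.det (Gm n s k x)"
definition wv :: "nat \<Rightarrow> (nat\<Rightarrow>nat) \<Rightarrow> nat \<Rightarrow> (nat\<Rightarrow>nat\<Rightarrow>real) \<Rightarrow> nat \<Rightarrow> nat \<Rightarrow> real" where
  "wv n s k x i l = (\<Sum>r<k. Ad n s k x $$ (i,r) * x l (s r)) / (real n * Dt n s k x)"

lemma Gm_carrier: "Gm n s k x \<in> carrier_mat k k" unfolding Gm_def by simp

lemma GA: assumes "i < k" "q < k"
  shows "(\<Sum>r<k. Gk n s x i r * Ad n s k x $$ (r,q)) = (if i = q then Dt n s k x else 0)"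
proof -
  have "(Gm n s k x * Ad n s k x) $$ (i,q) = (Dt n s k x \<cdot>\<^sub>m 1\<^sub>m k) $$ (i,q)"
    unfolding Ad_def Dt_def using adj_mat(2)[OF Gm_carrier] by simp
  moreover have "(Gm n s k x * Ad n s k x) $$ (i,q) = (\<Sum>r<k. Gk n s x i r * Ad n s k x $$ (r,q))"
    using assms adj_mat(1)[OF Gm_carrier, of n s k x]
    by (simp add: Ad_def Gm_def scalar_prod_def atLeast0LessThan)
  ultimately show ?thesis using assms by simp
qed

lemma AG: assumes "i < k" "q < k"
  shows "(\<Sum>r<k. Ad n s k x $$ (i,r) * Gk n s x r q) = (if i = q then Dt n s k x else 0)"
proof -
  have "(Ad n s k x * Gm n s k x) $$ (i,q) = (Dt n s k x \<cdot>\<^sub>m 1\<^sub>m k) $$ (i,q)"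
    unfolding Ad_def Dt_def using adj_mat(3)[OF Gm_carrier] by simp
  moreover have "(Ad n s k x * Gm n s k x) $$ (i,q) = (\<Sum>r<k. Ad n s k x $$ (i,r) * Gk n s x r q)"
    using assms adj_mat(1)[OF Gm_carrier, of n s k x]
    by (simp add: Ad_def Gm_def scalar_prod_def atLeast0LessThan)
  ultimately show ?thesis using assms by simp
qed

lemma sumsq_lin:
  fixes x :: "nat \<Rightarrow> nat \<Rightarrow> real"
  shows "(\<Sum>l<n. (\<Sum>r<k. c r * x l (s r))^2) = real n * (\<Sum>r<k. \<Sum>q<k. Gk n s x r q * c r * c q)"
proof -
  have "(\<Sum>l<n. (\<Sum>r<k. c r * x l (s r))^2) = (\<Sum>l<n. \<Sum>r<k. \<Sum>q<k. c r * c q * (x l (s r) * x l (s q)))"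
    by (simp add: power2_eq_square sum_product algebra_simps)
  also have "\<dots> = (\<Sum>r<k. \<Sum>q<k. c r * c q * (\<Sum>l<n. x l (s r) * x l (s q)))"
    by (simp add: sum_distrib_left sum.swap[of _ "{..<n}"])
  also have "\<dots> = (\<Sum>r<k. \<Sum>q<k. real n * (Gk n s x r q * c r * c q))"
    by (intro sum.cong refl) (cases "n = 0", simp_all add: Gk_def)
  also have "\<dots> = real n * (\<Sum>r<k. \<Sum>q<k. Gk n s x r q * c r * c q)"
    by (simp add: sum_distrib_left)
  finally show ?thesis .
qed

lemma wv_norm:
  assumes "i < k" "Dt n s k x \<noteq> 0" "n \<ge> 1"
  shows "(\<Sum>l<n. (wv n s k x i l)^2) = Ad n s k x $$ (i,i) / (real n * Dt n s k x)"
proof -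
  let ?A = "Ad n s k x" and ?D = "Dt n s k x"
  have "(\<Sum>l<n. (wv n s k x i l)^2) = (\<Sum>l<n. (\<Sum>r<k. ?A $$ (i,r) * x l (s r))^2) / (real n * ?D)^2"
    unfolding wv_def power_divide sum_divide_distrib[symmetric] by (rule refl)
  also have "(\<Sum>l<n. (\<Sum>r<k. ?A $$ (i,r) * x l (s r))^2) = real n * (\<Sum>r<k. \<Sum>q<k. Gk n s x r q * ?A $$ (i,r) * ?A $$ (i,q))"
    by (rule sumsq_lin)
  also have "(\<Sum>r<k. \<Sum>q<k. Gk n s x r q * ?A $$ (i,r) * ?A $$ (i,q)) = (\<Sum>q<k. ?A $$ (i,q) * (\<Sum>r<k. ?A $$ (i,r) * Gk n s x r q))"
    by (subst sum.swap) (simp add: sum_distrib_left algebra_simps)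
  also have "\<dots> = (\<Sum>q<k. ?A $$ (i,q) * (if i = q then ?D else 0))"
    using assms by (intro sum.cong) (auto simp: AG)
  also have "\<dots> = ?A $$ (i,i) * ?D" using assms by (simp add: if_distrib cong: if_cong)
  finally show ?thesis using assms by (simp add: power2_eq_square)
qed

lemma eig_transfer:
  assumes bij: "bij_betw s {..<k} S" and ev: "eigenvalue_on {..<k} (\<lambda>i j. B (s i) (s j)) \<mu>"
  shows "eigenvalue_on S B \<mu>"
proof -
  obtain v where v0: "\<forall>j. j \<notin> {..<k} \<longrightarrow> v j = 0" and vnz: "\<exists>j\<in>{..<k}. v j \<noteq> 0"
    and vev: "\<forall>i\<in>{..<k}. (\<Sum>j\<in>{..<k}. B (s i) (s j) * v j) = \<mu> * v i"
    using ev unfolding eigenvalue_on_def by blast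
  define t where "t = inv_into {..<k} s"
  have ts: "\<And>r. r < k \<Longrightarrow> t (s r) = r" unfolding t_def
    using bij by (simp add: bij_betw_def inv_into_f_f)
  have sS: "\<And>r. r < k \<Longrightarrow> s r \<in> S" using bij by (auto simp: bij_betw_def)
  have Ss: "\<And>j. j \<in> S \<Longrightarrow> \<exists>r<k. j = s r" using bij by (auto simp: bij_betw_def)
  define v' where "v' = (\<lambda>j. if j \<in> S then v (t j) else 0)"
  show ?thesis unfolding eigenvalue_on_def
  proof (intro exI[of _ v'] conjI allI impI ballI)
    show "\<exists>j\<in>S. v' j \<noteq> 0" using vnz sS ts unfolding v'_def by force
    fix i assume "i \<in> S"
    then obtain a where a: "a < k" "i = s a" using Ss by blast
    have "(\<Sum>j\<in>S. B i j * v' j) = (\<Sum>r\<in>{..<k}. B i (s r) * v' (s r))"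
      using sum.reindex_bij_betw[OF bij, of "\<lambda>j. B i j * v' j"] by simp
    also have "\<dots> = (\<Sum>r\<in>{..<k}. B (s a) (s r) * v r)"
      using a sS ts unfolding v'_def by (intro sum.cong) auto
    also have "\<dots> = \<mu> * v' i" using vev a sS ts unfolding v'_def by auto
    finally show "(\<Sum>j\<in>S. B i j * v' j) = \<mu> * v' i" .
  qed (auto simp: v'_def)
qed

lemma good_event:
  fixes x :: "nat \<Rightarrow> nat \<Rightarrow> real" and e beta :: "nat \<Rightarrow> real"
  assumes n1: "n \<ge> 1" and lmin: "lmin > 0" and bij: "bij_betw s {..<k} S" and Sp: "S \<subseteq> {..<p}"
    and beta0: "\<And>j. j \<notin> S \<Longrightarrow> beta j = 0"
    and eig: "\<And>\<mu>. eigenvalue_on S (\<lambda>i j. (\<Sum>l<n. x l i * x l j) / real n) \<mu> \<Longrightarrow> lmin \<le> \<mu>"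
  shows "Dt n s k x \<noteq> 0"
    "\<And>i. i < k \<Longrightarrow> (\<Sum>l<n. (wv n s k x i l)^2) \<le> 1 / (real n * lmin)"
    "\<And>i. i < k \<Longrightarrow> ls_coef n S x (\<lambda>l. (\<Sum>j<p. x l j * beta j) + e l) (s i) - beta (s i)
        = (\<Sum>l<n. wv n s k x i l * e l)"
proof -
  let ?G = "Gk n s x"
  let ?A = "Ad n s k x" and ?D = "Dt n s k x"
  have Gsym: "\<And>i j. ?G i j = ?G j i" unfolding Gk_def by (simp add: mult.commute)
  have Geq: "?G = (\<lambda>i j. (\<lambda>i j. (\<Sum>l<n. x l i * x l j) / real n) (s i) (s j))"
    unfolding Gk_def by (intro ext) simp
  have R: "\<And>u. lmin * (\<Sum>i<k. (u i)^2) \<le> (\<Sum>i<k. \<Sum>j<k. ?G i j * u i * u j)"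
  proof -
    fix u :: "nat \<Rightarrow> real"
    have "lmin * (\<Sum>i\<in>{..<k}. (u i)^2) \<le> (\<Sum>i\<in>{..<k}. \<Sum>j\<in>{..<k}. ?G i j * u i * u j)"
    proof (rule rayleigh)
      fix \<mu> assume "eigenvalue_on {..<k} ?G \<mu>"
      then have "eigenvalue_on S (\<lambda>i j. (\<Sum>l<n. x l i * x l j) / real n) \<mu>"
        by (intro eig_transfer[OF bij]) (simp add: Geq)
      then show "lmin \<le> \<mu>" by (rule eig)
    qed (auto simp: Gsym)
    then show "lmin * (\<Sum>i<k. (u i)^2) \<le> (\<Sum>i<k. \<Sum>j<k. ?G i j * u i * u j)" by simp
  qed
  have Rz: "\<forall>i<k. u i = 0" if "\<forall>a<k. (\<Sum>r<k. ?G a r * u r) = 0" for u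
  proof -
    have "(\<Sum>i<k. \<Sum>j<k. ?G i j * u i * u j) = (\<Sum>i<k. u i * (\<Sum>j<k. ?G i j * u j))"
      by (simp add: sum_distrib_left algebra_simps)
    also have "\<dots> = 0" using that by simp
    finally have "lmin * (\<Sum>i<k. (u i)^2) \<le> 0" using R[of u] by simp
    then have "(\<Sum>i<k. (u i)^2) \<le> 0" using lmin by (simp add: mult_le_0_iff)
    then have "(\<Sum>i<k. (u i)^2) = 0" by (meson order_antisym sum_nonneg zero_le_power2)
    then show ?thesis using sum_nonneg_eq_0_iff[of "{..<k}" "\<lambda>i. (u i)^2"] by auto
  qed
  show D0: "?D \<noteq> 0"
  proof
    assume "?D = 0"
    then obtain v where v: "v \<in> carrier_vec k" "v \<noteq> 0\<^sub>v k" "Gm n s k x *\<^sub>v v = 0\<^sub>v k"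
      using det_0_iff_vec_prod_zero[OF Gm_carrier] unfolding Dt_def by blast
    have "\<forall>a<k. (\<Sum>r<k. ?G a r * v $ r) = 0"
    proof (intro allI impI)
      fix a assume "a < k"
      then have "(Gm n s k x *\<^sub>v v) $ a = 0" using v(3) by simp
      then show "(\<Sum>r<k. ?G a r * v $ r) = 0" using \<open>a < k\<close> v(1)
        by (simp add: Gm_def scalar_prod_def atLeast0LessThan)
    qed
    then have "\<forall>i<k. v $ i = 0" using Rz[of "\<lambda>r. v $ r"] by simp
    then have "v = 0\<^sub>v k" using v(1) by (intro eq_vecI) auto
    then show False using v(2) by simp
  qed
  show "(\<Sum>l<n. (wv n s k x i l)^2) \<le> 1 / (real n * lmin)" if ik: "i < k" for i
  proof -
    define u where "u = (\<lambda>r. ?A $$ (r,i) / ?D)"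
    have Gu: "\<And>a. a < k \<Longrightarrow> (\<Sum>r<k. ?G a r * u r) = (if a = i then 1 else 0)"
      using GA[OF _ ik] D0 unfolding u_def by (simp add: sum_divide_distrib[symmetric] times_divide_eq_right)
    have Qu: "(\<Sum>a<k. \<Sum>r<k. ?G a r * u a * u r) = u i"
    proof -
      have "(\<Sum>a<k. \<Sum>r<k. ?G a r * u a * u r) = (\<Sum>a<k. u a * (\<Sum>r<k. ?G a r * u r))"
        by (simp add: sum_distrib_left algebra_simps)
      also have "\<dots> = (\<Sum>a<k. u a * (if a = i then 1 else 0))" using Gu by simp
      also have "\<dots> = u i" using ik by (simp add: if_distrib cong: if_cong)
      finally show ?thesis .
    qed
    have ui2: "(u i)^2 \<le> (\<Sum>a<k. (u a)^2)" using ik by (intro member_le_sum) auto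
    have Ru: "lmin * (\<Sum>a<k. (u a)^2) \<le> u i" using R[of u] Qu by simp
    have upos: "u i > 0"
    proof (rule ccontr)
      assume "\<not> u i > 0"
      then have "lmin * (\<Sum>a<k. (u a)^2) \<le> 0" using Ru by simp
      then have "(\<Sum>a<k. (u a)^2) \<le> 0" using lmin by (simp add: mult_le_0_iff)
      then have "(\<Sum>a<k. (u a)^2) = 0" by (meson order_antisym sum_nonneg zero_le_power2)
      then have "\<forall>a<k. u a = 0" using sum_nonneg_eq_0_iff[of "{..<k}" "\<lambda>i. (u i)^2"] by auto
      then have "(\<Sum>r<k. ?G i r * u r) = 0" by simp
      then show False using Gu[OF ik] by simp
    qed
    have "lmin * (u i)^2 \<le> u i" using Ru ui2 lmin by (meson mult_left_mono less_imp_le order_trans)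
    then have "lmin * u i \<le> 1" using upos by (simp add: power2_eq_square)
    then have ub: "u i \<le> 1 / lmin" using lmin by (simp add: field_simps)
    have "(\<Sum>l<n. (wv n s k x i l)^2) = u i / real n"
      using wv_norm[OF ik D0 n1] unfolding u_def by simp
    also have "\<dots> \<le> (1 / lmin) / real n" by (rule divide_right_mono[OF ub]) simp
    also have "\<dots> = 1 / (real n * lmin)" by simp
    finally show ?thesis .
  qed
  show "ls_coef n S x (\<lambda>l. (\<Sum>j<p. x l j * beta j) + e l) (s i) - beta (s i)
        = (\<Sum>l<n. wv n s k x i l * e l)" if ik: "i < k" for i
  proof -
    define Y where "Y = (\<lambda>l. (\<Sum>j<p. x l j * beta j) + e l)"
    define W where "W = (\<lambda>r. \<Sum>l<n. wv n s k x r l * e l)"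
    define c where "c = (\<lambda>a. (\<Sum>l<n. x l (s a) * e l) / real n)"
    have Wc: "W r = (\<Sum>q<k. ?A $$ (r,q) * c q) / ?D" for r
    proof -
      have "W r = (\<Sum>l<n. \<Sum>q<k. ?A $$ (r,q) * x l (s q) * e l) / (real n * ?D)"
        unfolding W_def wv_def by (simp add: sum_divide_distrib sum_distrib_right)
      also have "(\<Sum>l<n. \<Sum>q<k. ?A $$ (r,q) * x l (s q) * e l) = (\<Sum>q<k. ?A $$ (r,q) * (real n * c q))"
      proof -
        have cn: "real n * c q = (\<Sum>l<n. x l (s q) * e l)" for q unfolding c_def using n1 by simp
        show ?thesis unfolding cn by (subst sum.swap) (simp add: sum_distrib_left algebra_simps)
      qed
      also have "\<dots> = real n * (\<Sum>q<k. ?A $$ (r,q) * c q)"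
        by (simp add: sum_distrib_left algebra_simps)
      finally show ?thesis using n1 by simp
    qed
    have NE: "(\<Sum>r<k. ?G a r * W r) = c a" if ak: "a < k" for a
    proof -
      have "(\<Sum>r<k. ?G a r * W r) = (\<Sum>r<k. \<Sum>q<k. ?G a r * ?A $$ (r,q) * c q) / ?D"
        unfolding Wc by (simp add: sum_divide_distrib sum_distrib_left algebra_simps)
      also have "(\<Sum>r<k. \<Sum>q<k. ?G a r * ?A $$ (r,q) * c q) = (\<Sum>q<k. (\<Sum>r<k. ?G a r * ?A $$ (r,q)) * c q)"
        by (subst sum.swap) (simp add: sum_distrib_right)
      also have "\<dots> = (\<Sum>q<k. (if a = q then ?D else 0) * c q)"
        using ak by (intro sum.cong) (auto simp: GA)
      also have "\<dots> = (\<Sum>q<k. if q = a then ?D * c a else 0)" by (intro sum.cong) auto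
      also have "\<dots> = ?D * c a" using ak by simp
      finally show ?thesis using D0 by simp
    qed
    define t where "t = inv_into {..<k} s"
    have ts: "\<And>r. r < k \<Longrightarrow> t (s r) = r" unfolding t_def
      using bij by (simp add: bij_betw_def inv_into_f_f)
    have sS: "\<And>r. r < k \<Longrightarrow> s r \<in> S" using bij by (auto simp: bij_betw_def)
    have Ss: "\<And>j. j \<in> S \<Longrightarrow> \<exists>r<k. j = s r" using bij by (auto simp: bij_betw_def)
    have reidx: "\<And>f. (\<Sum>j\<in>S. f j) = (\<Sum>r<k. f (s r))"
      using sum.reindex_bij_betw[OF bij] by (metis lessThan_def)
    have finS: "finite S" using Sp finite_subset by blast
    have Ysum: "(\<Sum>j<p. x l j * beta j) = (\<Sum>r<k. x l (s r) * beta (s r))" for l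
    proof -
      have "(\<Sum>j<p. x l j * beta j) = (\<Sum>j\<in>S. x l j * beta j)"
        using Sp beta0 by (intro sum.mono_neutral_right) auto
      then show ?thesis using reidx by simp
    qed
    define R where "R = (\<lambda>l. e l - (\<Sum>r<k. x l (s r) * W r))"
    have Rorth: "(\<Sum>l<n. x l (s a) * R l) = 0" if ak: "a < k" for a
    proof -
      have "(\<Sum>l<n. x l (s a) * R l) = (\<Sum>l<n. x l (s a) * e l) - (\<Sum>l<n. \<Sum>r<k. x l (s a) * x l (s r) * W r)"
        unfolding R_def by (simp add: sum_subtractf right_diff_distrib sum_distrib_left algebra_simps)
      also have "(\<Sum>l<n. \<Sum>r<k. x l (s a) * x l (s r) * W r) = (\<Sum>r<k. real n * (?G a r * W r))"
        using n1 by (subst sum.swap) (simp add: Gk_def sum_distrib_right)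
      also have "\<dots> = real n * c a" using NE[OF ak] by (simp add: sum_distrib_left[symmetric])
      also have "(\<Sum>l<n. x l (s a) * e l) = real n * c a" unfolding c_def using n1 by simp
      finally show ?thesis by simp
    qed
    define bs where "bs = (\<lambda>j. if j \<in> S then beta j + W (t j) else 0)"
    have Fdec: "rss n S x Y b = (\<Sum>l<n. (R l)^2) +
        real n * (\<Sum>r<k. \<Sum>q<k. ?G r q * (b (s r) - bs (s r)) * (b (s q) - bs (s q)))" for b
    proof -
      define d where "d = (\<lambda>r. b (s r) - bs (s r))"
      define z where "z = (\<lambda>l. \<Sum>r<k. d r * x l (s r))"
      have res: "Y l - (\<Sum>j\<in>S. x l j * b j) = R l - z l" for l
      proof -
        have "Y l - (\<Sum>j\<in>S. x l j * b j) = e l - (\<Sum>r<k. x l (s r) * (b (s r) - beta (s r)))"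
          unfolding Y_def Ysum reidx by (simp add: sum_subtractf right_diff_distrib)
        also have "(\<Sum>r<k. x l (s r) * (b (s r) - beta (s r))) = (\<Sum>r<k. x l (s r) * W r + d r * x l (s r))"
          unfolding d_def bs_def using sS ts by (intro sum.cong) (auto simp: algebra_simps)
        finally show ?thesis unfolding R_def z_def by (simp add: sum.distrib)
      qed
      have "rss n S x Y b = (\<Sum>l<n. (R l - z l)^2)" unfolding rss_def using res by simp
      also have "\<dots> = (\<Sum>l<n. (R l)^2) - 2 * (\<Sum>l<n. R l * z l) + (\<Sum>l<n. (z l)^2)"
        by (simp add: power2_diff sum.distrib sum_subtractf sum_distrib_left algebra_simps)
      also have "(\<Sum>l<n. R l * z l) = (\<Sum>r<k. d r * (\<Sum>l<n. x l (s r) * R l))"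
        unfolding z_def sum_distrib_left by (subst sum.swap) (simp add: algebra_simps)
      also have "\<dots> = 0" using Rorth by simp
      also have "(\<Sum>l<n. (z l)^2) = real n * (\<Sum>r<k. \<Sum>q<k. ?G r q * d r * d q)"
        unfolding z_def by (rule sumsq_lin)
      finally show ?thesis unfolding d_def by simp
    qed
    have Fge: "rss n S x Y b \<ge> (\<Sum>l<n. (R l)^2) + real n * lmin * (\<Sum>r<k. (b (s r) - bs (s r))^2)" for b
      using Fdec[of b] R[of "\<lambda>r. b (s r) - bs (s r)"] n1
      by (simp add: mult.assoc mult_left_mono)
    have Fbs: "rss n S x Y bs = (\<Sum>l<n. (R l)^2)" using Fdec[of bs] by simp
    have bs0: "\<forall>j. j \<notin> S \<longrightarrow> bs j = 0" unfolding bs_def by simp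
    have lsbs: "is_ls n S x Y bs" unfolding is_ls_def
    proof (intro conjI bs0 allI impI)
      fix b' :: "nat \<Rightarrow> real"
      have "0 \<le> real n * lmin * (\<Sum>r<k. (b' (s r) - bs (s r))^2)"
        using lmin by (intro mult_nonneg_nonneg sum_nonneg) auto
      then show "rss n S x Y bs \<le> rss n S x Y b'" using Fge[of b'] Fbs by linarith
    qed
    have uniq: "b' = bs" if "is_ls n S x Y b'" for b'
    proof -
      have b'0: "\<forall>j. j \<notin> S \<longrightarrow> b' j = 0" and le: "rss n S x Y b' \<le> rss n S x Y bs"
        using that bs0 unfolding is_ls_def by blast+
      have "real n * lmin * (\<Sum>r<k. (b' (s r) - bs (s r))^2) \<le> 0"
        using Fge[of b'] Fbs le by linarith
      moreover have "real n * lmin > 0" using n1 lmin by simp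
      ultimately have "(\<Sum>r<k. (b' (s r) - bs (s r))^2) \<le> 0"
        by (metis mult_le_0_iff not_le mult.assoc less_eq_real_def)
      then have "(\<Sum>r<k. (b' (s r) - bs (s r))^2) = 0" by (meson order_antisym sum_nonneg zero_le_power2)
      then have "\<forall>r<k. b' (s r) = bs (s r)"
        using sum_nonneg_eq_0_iff[of "{..<k}" "\<lambda>r. (b' (s r) - bs (s r))^2"] by auto
      then show ?thesis using Ss b'0 bs0 by (intro ext) (metis)
    qed
    have "ls_coef n S x Y = bs" unfolding ls_coef_def using lsbs uniq by (rule the_equality)
    then show ?thesis using ik sS ts unfolding Y_def[symmetric] bs_def W_def by simp
  qed
qed
lemma det_meas:
  assumes h: "\<And>a b. a < m \<Longrightarrow> b < m \<Longrightarrow> (\<lambda>z. h z (a,b)) \<in> borel_measurable N"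
  shows "(\<lambda>z. Determinant.det (Matrix.mat m m (h z)) :: real) \<in> borel_measurable N"
proof -
  have eq: "Determinant.det (Matrix.mat m m (h z)) =
     (\<Sum>p\<in>{p. p permutes {0..<m}}. signof p * (\<Prod>i\<in>{0..<m}. h z (i, p i)))" for z
    unfolding det_def
    by (auto intro!: sum.cong prod.cong simp: permutes_in_image)
  have fin: "finite {p. p permutes {0..<m}}" by (simp add: finite_permutations)
  show ?thesis unfolding eq
  proof (intro borel_measurable_sum borel_measurable_times borel_measurable_prod borel_measurable_const)
    fix p i assume "p \<in> {p. p permutes {0..<m}}" "i \<in> {0..<m}"
    then show "(\<lambda>z. h z (i, p i)) \<in> borel_measurable N"
      by (intro h) (auto simp: permutes_in_image)
  qed
qed

lemma adj_meas:
  assumes g: "\<And>a b. a < k \<Longrightarrow> b < k \<Longrightarrow> (\<lambda>z. g z (a,b)) \<in> borel_measurable N"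
    and ik: "i < k" "r < k"
  shows "(\<lambda>z. adj_mat (Matrix.mat k k (g z)) $$ (i,r) :: real) \<in> borel_measurable N"
proof -
  have eq: "adj_mat (Matrix.mat k k (g z)) $$ (i,r) = (-1)^(r+i) *
     Determinant.det (Matrix.mat (k-1) (k-1) (\<lambda>(a,b). Matrix.mat k k (g z) $$
        (if a < r then a else Suc a, if b < i then b else Suc b)))" for z
    using ik by (simp add: adj_mat_def cofactor_def mat_delete_def)
  show ?thesis unfolding eq
  proof (intro borel_measurable_times borel_measurable_const det_meas)
    fix a b assume ab: "a < k - 1" "b < k - 1"
    then have "(\<lambda>z. (case (a,b) of (a,b) \<Rightarrow> Matrix.mat k k (g z) $$
        (if a < r then a else Suc a, if b < i then b else Suc b))) =
        (\<lambda>z. g z (if a < r then a else Suc a, if b < i then b else Suc b))"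
      by auto
    moreover have "(\<lambda>z. g z (if a < r then a else Suc a, if b < i then b else Suc b)) \<in> borel_measurable N"
      using ab by (intro g) auto
    ultimately show "(\<lambda>z. (case (a,b) of (a,b) \<Rightarrow> Matrix.mat k k (g z) $$
        (if a < r then a else Suc a, if b < i then b else Suc b))) \<in> borel_measurable N" by simp
  qed
qed

lemma wv_meas:
  assumes f: "\<And>l j. (\<lambda>z. f z l j) \<in> borel_measurable N" and ik: "i < k"
  shows "(\<lambda>z. wv n s k (f z) i l) \<in> borel_measurable N"
proof -
  have Gkm: "(\<lambda>z. Gk n s (f z) a b) \<in> borel_measurable N" for a b
    unfolding Gk_def using f by measurable
  have Gme: "(\<lambda>z. (case (a,b) of (a,b) \<Rightarrow> Gk n s (f z) a b)) \<in> borel_measurable N" for a b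
    using Gkm by simp
  have Dm: "(\<lambda>z. Dt n s k (f z)) \<in> borel_measurable N"
    unfolding Dt_def Gm_def by (rule det_meas) (use Gme in auto)
  have Am: "(\<lambda>z. Ad n s k (f z) $$ (i,r)) \<in> borel_measurable N" if "r < k" for r
    unfolding Ad_def Gm_def by (rule adj_meas[OF _ ik that]) (use Gme in auto)
  show ?thesis unfolding wv_def
    by (intro borel_measurable_divide borel_measurable_sum borel_measurable_times
        borel_measurable_const Dm Am f) auto
qed

lemma chernoff:
  fixes M :: "'a measure" and X :: "nat \<Rightarrow> nat \<Rightarrow> 'a \<Rightarrow> real" and eps :: "nat \<Rightarrow> 'a \<Rightarrow> real"
    and w :: "(nat \<Rightarrow> nat \<Rightarrow> real) \<Rightarrow> nat \<Rightarrow> real"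
  assumes P: "prob_space M" and n1: "n \<ge> 1"
    and indep: "prob_space.indep_vars M (\<lambda>_. borel)
           (\<lambda>i. case i of Inl (l, j) \<Rightarrow> X l j | Inr l \<Rightarrow> eps l)
           (({..<n} \<times> {..<p}) <+> {..<n})"
    and mgf: "\<forall>l<n. \<forall>t::real. integrable M (\<lambda>\<omega>. exp (t * eps l \<omega>)) \<and>
           (\<integral>\<omega>. exp (t * eps l \<omega>) \<partial>M) \<le> exp (\<sigma>\<^sup>2 * t\<^sup>2 / 2)"
    and wm: "\<And>l. l < n \<Longrightarrow> (\<lambda>z. w (\<lambda>l j. z (Inl (l,j))) l) \<in> borel_measurable (PiM (({..<n} \<times> {..<p}) <+> {..<n}) (\<lambda>_. borel))"
    and wc: "\<And>x x' l. l < n \<Longrightarrow> (\<And>l' j. l' < n \<Longrightarrow> j < p \<Longrightarrow> x l' j = x' l' j) \<Longrightarrow> w x l = w x' l"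
    and V: "V > 0" and t: "t > 0" and sig: "\<sigma> > 0"
  shows "emeasure M {\<omega>\<in>space M. (\<Sum>l<n. (w (\<lambda>l j. X l j \<omega>) l)\<^sup>2) \<le> V \<and>
           t < (\<Sum>l<n. w (\<lambda>l j. X l j \<omega>) l * eps l \<omega>)} \<le> ennreal (exp (- t\<^sup>2 / (2 * \<sigma>\<^sup>2 * V)))"
proof -
  interpret prob_space M by (rule P)
  define I where "I = (({..<n} \<times> {..<p}) <+> {..<n})"
  define I1 :: "((nat \<times> nat) + nat) set" where "I1 = Inl ` ({..<n} \<times> {..<p})"
  define I2 :: "((nat \<times> nat) + nat) set" where "I2 = Inr ` {..<n}"
  have II: "I = I1 \<union> I2" unfolding I_def I1_def I2_def Plus_def by simp
  have I12: "I1 \<inter> I2 = {}" unfolding I1_def I2_def by auto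
  have finI1: "finite I1" and finI2: "finite I2" unfolding I1_def I2_def by auto
  define Z where "Z = (\<lambda>i. case i of Inl (l, j) \<Rightarrow> X l j | Inr l \<Rightarrow> eps l)"
  have indep': "indep_vars (\<lambda>_. borel) Z I" using indep unfolding Z_def I_def .
  have rv: "\<And>i. i \<in> I \<Longrightarrow> Z i \<in> borel_measurable M"
    using indep' unfolding indep_vars_def by auto
  define Z' where "Z' = (\<lambda>i. if i \<in> I then Z i else (\<lambda>_. 0::real))"
  have rv': "Z' i \<in> borel_measurable M" for i unfolding Z'_def using rv by auto
  define M' where "M' = (\<lambda>i. distr M borel (Z' i))"
  have probM': "prob_space (M' i)" for i unfolding M'_def by (rule prob_space_distr[OF rv'])
  interpret PP: product_prob_space M' by (simp add: product_prob_space_def product_prob_space_axioms_def probM' product_sigma_finite_def prob_space_imp_sigma_finite)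
  have sM': "sets (M' i) = sets borel" for i unfolding M'_def by simp
  have "Inr 0 \<in> I" unfolding I_def using n1 by auto
  then have Ine: "I \<noteq> {}" by blast
  define Zr where "Zr = (\<lambda>\<omega>. \<lambda>i\<in>I. Z i \<omega>)"
  have Zrm: "Zr \<in> measurable M (PiM I (\<lambda>_. borel))"
    unfolding Zr_def by (intro measurable_restrict rv)
  have distrEq: "distr M (PiM I (\<lambda>_. borel)) Zr = PiM I M'"
  proof -
    have "distr M (PiM I (\<lambda>_. borel)) Zr = PiM I (\<lambda>i. distr M borel (Z i))"
      using indep_vars_iff_distr_eq_PiM'[where I=I and M'="\<lambda>_. borel" and X=Z, OF Ine] rv indep' unfolding Zr_def by simp
    also have "\<dots> = PiM I M'" unfolding M'_def Z'_def by (intro PiM_cong distr_cong) auto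
    finally show ?thesis .
  qed
  have sPi: "sets (PiM J M') = sets (PiM J (\<lambda>_. borel))" for J
    by (intro sets_PiM_cong) (auto simp: sM')
  have spPi: "space (PiM J M') = space (PiM J (\<lambda>_. borel))" for J
    using sPi sets_eq_imp_space_eq by blast
  define xp where "xp = (\<lambda>z::((nat \<times> nat) + nat) \<Rightarrow> real. \<lambda>l j. z (Inl (l,j)))"
  define good where "good = (\<lambda>z. (\<Sum>l<n. (w (xp z) l)\<^sup>2) \<le> V)"
  define Wz where "Wz = (\<lambda>z. \<Sum>l<n. w (xp z) l * z (Inr l))"
  define C where "C = {z \<in> space (PiM I (\<lambda>_. borel)). good z \<and> t < Wz z}"
  have wm': "\<And>l. l < n \<Longrightarrow> (\<lambda>z. w (xp z) l) \<in> borel_measurable (PiM I (\<lambda>_. borel))"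
    using wm unfolding xp_def I_def by simp
  have compm: "(\<lambda>z. z (Inr l)) \<in> borel_measurable (PiM I (\<lambda>_. borel))" if "l < n" for l
    using that unfolding I_def by (intro measurable_component_singleton) auto
  have goodm: "(\<lambda>z. (\<Sum>l<n. (w (xp z) l)\<^sup>2)) \<in> borel_measurable (PiM I (\<lambda>_. borel))"
    by (intro borel_measurable_sum borel_measurable_power wm') auto
  have Wzm: "Wz \<in> borel_measurable (PiM I (\<lambda>_. borel))"
    unfolding Wz_def by (intro borel_measurable_sum borel_measurable_times wm' compm) auto
  have Cm: "C \<in> sets (PiM I (\<lambda>_. borel))"
  proof -
    have "C = {z \<in> space (PiM I (\<lambda>_. borel)). (\<Sum>l<n. (w (xp z) l)\<^sup>2) \<le> V} \<inter>
              {z \<in> space (PiM I (\<lambda>_. borel)). t < Wz z}"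
      unfolding C_def good_def by auto
    also have "\<dots> \<in> sets (PiM I (\<lambda>_. borel))"
      by (intro sets.Int borel_measurable_le[OF goodm] borel_measurable_less[OF _ Wzm]) simp_all
    finally show ?thesis .
  qed
  have setEq: "{\<omega>\<in>space M. (\<Sum>l<n. (w (\<lambda>l j. X l j \<omega>) l)\<^sup>2) \<le> V \<and>
           t < (\<Sum>l<n. w (\<lambda>l j. X l j \<omega>) l * eps l \<omega>)} = Zr -` C \<inter> space M"
  proof -
    have xpZ: "w (xp (Zr \<omega>)) l = w (\<lambda>l j. X l j \<omega>) l" if "l < n" for \<omega> l
      using that by (intro wc) (auto simp: xp_def Zr_def Z_def I_def)
    have eZ: "Zr \<omega> (Inr l) = eps l \<omega>" if "l < n" for \<omega> l
      using that by (auto simp: Zr_def Z_def I_def)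
    have "Zr \<omega> \<in> space (PiM I (\<lambda>_. borel))" if "\<omega> \<in> space M" for \<omega>
      using Zrm that by (rule measurable_space)
    then show ?thesis unfolding C_def good_def Wz_def using xpZ eZ by auto
  qed
  have em: "emeasure M (Zr -` C \<inter> space M) = emeasure (PiM I M') C"
    using emeasure_distr[OF Zrm Cm] distrEq by simp
  define s where "s = t / (\<sigma>\<^sup>2 * V)"
  have spos: "s > 0" unfolding s_def using t V sig by simp
  define B where "B = exp (\<sigma>\<^sup>2 * s\<^sup>2 * V / 2 - s * t)"
  have Bval: "B = exp (- t\<^sup>2 / (2 * \<sigma>\<^sup>2 * V))"
    unfolding B_def s_def using V sig by (simp add: field_simps power2_eq_square)
  define F where "F = (\<lambda>z. ennreal (if good z then exp (s * Wz z - s * t) else 0))"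
  have Fm0: "F \<in> borel_measurable (PiM I (\<lambda>_. borel))"
  proof -
    have gp: "Measurable.pred (PiM I (\<lambda>_. borel)) good"
      unfolding good_def pred_def using borel_measurable_le[OF goodm] by simp
    show ?thesis unfolding F_def using gp Wzm by measurable
  qed
  have Fm: "F \<in> borel_measurable (PiM (I1 \<union> I2) M')"
    using Fm0 unfolding II[symmetric] by (simp add: measurable_cong_sets[OF sPi refl])
  have "emeasure (PiM I M') C = (\<integral>\<^sup>+ z. indicator C z \<partial>PiM I M')"
    using Cm sPi by simp
  also have "\<dots> \<le> (\<integral>\<^sup>+ z. F z \<partial>PiM I M')"
  proof (rule nn_integral_mono)
    fix z show "indicator C z \<le> F z"
    proof (cases "z \<in> C")
      case True
      then have "good z" "t < Wz z" unfolding C_def by auto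
      then have "1 \<le> exp (s * Wz z - s * t)" using spos by (simp add: algebra_simps)
      then show ?thesis using True \<open>good z\<close> unfolding F_def by simp
    qed (simp add: F_def)
  qed
  also have "\<dots> = (\<integral>\<^sup>+ x. (\<integral>\<^sup>+ y. F (merge I1 I2 (x, y)) \<partial>PiM I2 M') \<partial>PiM I1 M')"
    unfolding II by (rule PP.product_nn_integral_fold[OF I12 finI1 finI2 Fm])
  also have "\<dots> \<le> (\<integral>\<^sup>+ x. ennreal B \<partial>PiM I1 M')"
  proof (rule nn_integral_mono)
    fix x assume x: "x \<in> space (PiM I1 M')"
    have xext: "x i = undefined" if "i \<notin> I1" for i
      using x that by (auto simp: space_PiM PiE_def extensional_def)
    have mx: "xp (merge I1 I2 (x, y)) = xp x" for y
      unfolding xp_def using xext by (intro ext) (auto simp: merge_def I2_def)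
    define a where "a = (\<lambda>l. w (xp x) l)"
    have my: "merge I1 I2 (x, y) (Inr l) = y (Inr l)" if y: "y \<in> space (PiM I2 M')" for y l
    proof (cases "l < n")
      case True then show ?thesis using I12 by (simp add: I2_def)
    next
      case False
      then have "Inr l \<notin> I2" "Inr l \<notin> I1" unfolding I1_def I2_def by auto
      moreover have "y (Inr l) = undefined" using y \<open>Inr l \<notin> I2\<close> by (auto simp: space_PiM PiE_def extensional_def)
      ultimately show ?thesis by (simp add: merge_def)
    qed
    show "(\<integral>\<^sup>+ y. F (merge I1 I2 (x, y)) \<partial>PiM I2 M') \<le> ennreal B"
    proof (cases "good x")
      case False
      then have "F (merge I1 I2 (x, y)) = 0" for y unfolding F_def good_def using mx by simp
      then show ?thesis by simp
    next
      case True
      define f where "f = (\<lambda>(i::(nat\<times>nat)+nat) (v::real). ennreal (exp (s * a (projr i) * v)))"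
      have fm: "f i \<in> borel_measurable (M' i)" for i
        unfolding f_def measurable_cong_sets[OF sM' refl] by measurable
      have Feq: "F (merge I1 I2 (x, y)) = ennreal (exp (- s * t)) * (\<Prod>i\<in>I2. f i (y i))"
        if y: "y \<in> space (PiM I2 M')" for y
      proof -
        have e1: "s * Wz (merge I1 I2 (x, y)) - s * t = - s * t + (\<Sum>l<n. s * a l * y (Inr l))"
          unfolding Wz_def mx a_def using my[OF y] by (simp add: sum_distrib_left algebra_simps)
        have "exp (s * Wz (merge I1 I2 (x, y)) - s * t) = exp (- s * t) * (\<Prod>l<n. exp (s * a l * y (Inr l)))"
          by (simp only: e1 exp_add exp_sum finite_lessThan)
        also have "(\<Prod>l<n. exp (s * a l * y (Inr l))) = (\<Prod>i\<in>I2. exp (s * a (projr i) * y i))"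
          unfolding I2_def by (subst prod.reindex) (auto simp: inj_on_def)
        finally show ?thesis unfolding F_def f_def using True mx
          by (simp add: prod_ennreal ennreal_mult' good_def)
      qed
      have "(\<integral>\<^sup>+ y. F (merge I1 I2 (x, y)) \<partial>PiM I2 M') =
            (\<integral>\<^sup>+ y. ennreal (exp (- s * t)) * (\<Prod>i\<in>I2. f i (y i)) \<partial>PiM I2 M')"
        by (intro nn_integral_cong) (simp add: Feq)
      also have "\<dots> = ennreal (exp (- s * t)) * (\<integral>\<^sup>+ y. (\<Prod>i\<in>I2. f i (y i)) \<partial>PiM I2 M')"
      proof (rule nn_integral_cmult)
        show "(\<lambda>y. \<Prod>i\<in>I2. f i (y i)) \<in> borel_measurable (PiM I2 M')"
          using fm by (intro borel_measurable_prod_ennreal) (auto intro: measurable_compose[OF measurable_component_singleton])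
      qed
      also have "(\<integral>\<^sup>+ y. (\<Prod>i\<in>I2. f i (y i)) \<partial>PiM I2 M') = (\<Prod>i\<in>I2. integral\<^sup>N (M' i) (f i))"
        by (rule PP.product_nn_integral_prod[OF finI2 fm])
      also have "\<dots> \<le> ennreal (\<Prod>i\<in>I2. exp (\<sigma>\<^sup>2 * (s * a (projr i))\<^sup>2 / 2))"
      proof -
        define E where "E = (\<lambda>i::(nat\<times>nat)+nat. \<integral>\<omega>. exp (s * a (projr i) * eps (projr i) \<omega>) \<partial>M)"
        have fi: "integral\<^sup>N (M' i) (f i) = ennreal (E i)" if i2: "i \<in> I2" for i
        proof -
          obtain l where l: "l < n" "i = Inr l" using i2 unfolding I2_def by auto
          have Z'i: "Z' i = eps l" using l unfolding Z'_def Z_def I_def by auto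
          have "integral\<^sup>N (M' i) (f i) = (\<integral>\<^sup>+ \<omega>. f i (Z' i \<omega>) \<partial>M)"
            unfolding M'_def by (rule nn_integral_distr[OF rv']) (use fm in \<open>simp add: M'_def\<close>)
          also have "\<dots> = (\<integral>\<^sup>+ \<omega>. ennreal (exp (s * a l * eps l \<omega>)) \<partial>M)"
            unfolding f_def Z'i using l by simp
          also have "\<dots> = ennreal (E i)"
          proof -
            have int: "integrable M (\<lambda>\<omega>. exp (s * a l * eps l \<omega>))" using mgf l(1) by blast
            show ?thesis unfolding E_def using l int by (subst nn_integral_eq_integral) auto
          qed
          finally show ?thesis .
        qed
        have "(\<Prod>i\<in>I2. integral\<^sup>N (M' i) (f i)) = (\<Prod>i\<in>I2. ennreal (E i))"
          using fi by (rule prod.cong[OF refl])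
        also have "\<dots> = ennreal (\<Prod>i\<in>I2. E i)"
          unfolding E_def by (rule prod_ennreal) (simp add: integral_nonneg)
        also have "\<dots> \<le> ennreal (\<Prod>i\<in>I2. exp (\<sigma>\<^sup>2 * (s * a (projr i))\<^sup>2 / 2))"
        proof (rule ennreal_leI, rule prod_mono)
          fix i assume "i \<in> I2"
          then obtain l where l: "l < n" "i = Inr l" unfolding I2_def by auto
          show "0 \<le> E i \<and> E i \<le> exp (\<sigma>\<^sup>2 * (s * a (projr i))\<^sup>2 / 2)"
          proof -
            have "(\<integral>\<omega>. exp (s * a l * eps l \<omega>) \<partial>M) \<le> exp (\<sigma>\<^sup>2 * (s * a l)\<^sup>2 / 2)" using mgf l(1) by blast
            then show ?thesis unfolding E_def using l by (auto simp: integral_nonneg)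
          qed
        qed
        finally show ?thesis .
      qed
      also have "(\<Prod>i\<in>I2. exp (\<sigma>\<^sup>2 * (s * a (projr i))\<^sup>2 / 2)) = exp (\<sigma>\<^sup>2 * s\<^sup>2 * (\<Sum>l<n. (a l)\<^sup>2) / 2)"
      proof -
        have "(\<Prod>i\<in>I2. exp (\<sigma>\<^sup>2 * (s * a (projr i))\<^sup>2 / 2)) = (\<Prod>l<n. exp (\<sigma>\<^sup>2 * (s * a l)\<^sup>2 / 2))"
          unfolding I2_def by (subst prod.reindex) (auto simp: inj_on_def)
        also have "\<dots> = exp (\<Sum>l<n. \<sigma>\<^sup>2 * (s * a l)\<^sup>2 / 2)" by (simp add: exp_sum)
        also have "(\<Sum>l<n. \<sigma>\<^sup>2 * (s * a l)\<^sup>2 / 2) = \<sigma>\<^sup>2 * s\<^sup>2 * (\<Sum>l<n. (a l)\<^sup>2) / 2"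
          by (simp add: sum_distrib_left sum_divide_distrib power_mult_distrib algebra_simps)
        finally show ?thesis .
      qed
      finally have "(\<integral>\<^sup>+ y. F (merge I1 I2 (x, y)) \<partial>PiM I2 M') \<le>
          ennreal (exp (- s * t)) * ennreal (exp (\<sigma>\<^sup>2 * s\<^sup>2 * (\<Sum>l<n. (a l)\<^sup>2) / 2))"
        by (simp add: mult_left_mono)
      also have "\<dots> = ennreal (exp (\<sigma>\<^sup>2 * s\<^sup>2 * (\<Sum>l<n. (a l)\<^sup>2) / 2 - s * t))"
        by (simp add: ennreal_mult'[symmetric] exp_add[symmetric])
      also have "\<dots> \<le> ennreal B"
      proof -
        have "(\<Sum>l<n. (a l)\<^sup>2) \<le> V" using True unfolding good_def a_def .
        then have "\<sigma>\<^sup>2 * s\<^sup>2 * (\<Sum>l<n. (a l)\<^sup>2) \<le> \<sigma>\<^sup>2 * s\<^sup>2 * V"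
          by (intro mult_left_mono) auto
        then show ?thesis unfolding B_def by (intro ennreal_leI) simp
      qed
      finally show ?thesis .
    qed
  qed
  also have "\<dots> = ennreal B"
  proof -
    have "prob_space (PiM I1 M')" by (rule prob_space_PiM) (rule probM')
    then show ?thesis by (simp add: prob_space.emeasure_space_1)
  qed
  finally show ?thesis unfolding setEq em Bval .
qed
lemma numeric:
  fixes p n :: nat and a \<sigma> lmin :: real
  assumes "p \<ge> 2" "n \<ge> 1" "a > 0" "\<sigma> > 0" "lmin > 0"
  shows "exp (- (\<sigma> * (1 / sqrt lmin) * sqrt (2 * (1 + a) * ln (real p)) / sqrt (real n))\<^sup>2 /
           (2 * \<sigma>\<^sup>2 * (1 / (real n * lmin)))) = 1 / real p powr (1 + a)"
proof -
  have lp: "ln (real p) > 0" using assms by simp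
  have "(\<sigma> * (1 / sqrt lmin) * sqrt (2 * (1 + a) * ln (real p)) / sqrt (real n))\<^sup>2
        = \<sigma>\<^sup>2 * (1 / lmin) * (2 * (1 + a) * ln (real p)) / real n"
    using assms lp by (simp add: power_mult_distrib power_divide real_sqrt_pow2)
  then have "(\<sigma> * (1 / sqrt lmin) * sqrt (2 * (1 + a) * ln (real p)) / sqrt (real n))\<^sup>2 /
           (2 * \<sigma>\<^sup>2 * (1 / (real n * lmin))) = (1 + a) * ln (real p)"
    using assms by (simp add: field_simps power2_eq_square)
  moreover have "exp (- ((1 + a) * ln (real p))) = 1 / real p powr (1 + a)"
    using assms by (simp add: powr_def exp_minus inverse_eq_divide)
  ultimately show ?thesis by simp
qed

lemma Gm_cong:
  assumes "\<And>l' j. l' < n \<Longrightarrow> j < p \<Longrightarrow> x l' j = x' l' j" "\<And>r. r < k \<Longrightarrow> s r < p"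
  shows "Gm n s k x = Gm n s k x'"
  unfolding Gm_def Gk_def using assms by (intro eq_matI) auto

lemma wv_cong:
  assumes "\<And>l' j. l' < n \<Longrightarrow> j < p \<Longrightarrow> x l' j = x' l' j" "\<And>r. r < k \<Longrightarrow> s r < p" "l < n"
  shows "wv n s k x i l = wv n s k x' i l"
proof -
  have g: "Gm n s k x = Gm n s k x'" by (rule Gm_cong[OF assms(1,2)])
  show ?thesis unfolding wv_def Ad_def Dt_def g using assms by simp
qed

theorem lemma3:
  fixes M :: "'a measure"
    and X :: "nat \<Rightarrow> nat \<Rightarrow> 'a \<Rightarrow> real"
    and eps :: "nat \<Rightarrow> 'a \<Rightarrow> real"
    and beta :: "nat \<Rightarrow> real"
    and S0 :: "nat set"
    and p n k :: nat
    and \<sigma> a lmax lmin lam :: real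
  assumes "prob_space M"
    and "p \<ge> 2" and "n \<ge> 1" and "\<sigma> > 0" and "a > 0"
    and "\<forall>j\<ge>p. beta j = 0"
    and "S0 = {j. j < p \<and> beta j \<noteq> 0}"
    and "card S0 = k" and "k \<ge> 1"
    and indep: "prob_space.indep_vars M (\<lambda>_. borel)
           (\<lambda>i. case i of Inl (l, j) \<Rightarrow> X l j | Inr l \<Rightarrow> eps l)
           (({..<n} \<times> {..<p}) <+> {..<n})"
    and "\<forall>l<n. \<forall>j<p. integrable M (X l j) \<and> (\<integral>\<omega>. X l j \<omega> \<partial>M) = 0"
    and "\<forall>l<n. \<forall>j<p. \<forall>t::real. integrable M (\<lambda>\<omega>. exp (t * X l j \<omega>)) \<and>
           (\<integral>\<omega>. exp (t * X l j \<omega>) \<partial>M) \<le> exp (t\<^sup>2 / 2)"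
    and "\<forall>l<n. integrable M (eps l) \<and> (\<integral>\<omega>. eps l \<omega> \<partial>M) = 0"
    and "\<forall>l<n. \<forall>t::real. integrable M (\<lambda>\<omega>. exp (t * eps l \<omega>)) \<and>
           (\<integral>\<omega>. exp (t * eps l \<omega>) \<partial>M) \<le> exp (\<sigma>\<^sup>2 * t\<^sup>2 / 2)"
    and "lmax \<ge> lmin" and "lmin > 0" and "lam > 0"
  shows
    "let Y = (\<lambda>\<omega> l. (\<Sum>j<p. X l j \<omega> * beta j) + eps l \<omega>);
         G = (\<lambda>\<omega> i j. (\<Sum>l<n. X l i \<omega> * X l j \<omega>) / real n);
         E_cond = (\<lambda>\<omega>. (\<exists>\<mu>. eigenvalue_on S0 (G \<omega>) \<mu> \<and> (\<mu> < lmin \<or> \<mu> > lmax)) \<or>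
                        (\<Sum>l<n. (eps l \<omega>)\<^sup>2) / real n > \<sigma>\<^sup>2 * lam);
         \<tau> = sqrt (2 * (1 + a) * ln (real p));
         c0 = 1 / sqrt lmin;
         bhat = (\<lambda>\<omega>. ls_coef n S0 (\<lambda>l j. X l j \<omega>) (Y \<omega>));
         E_ls = (\<lambda>\<omega>. Max ((\<lambda>j. \<bar>bhat \<omega> j - beta j\<bar>) ` S0) > \<sigma> * c0 * \<tau> / sqrt (real n))
     in measure M {\<omega> \<in> space M. E_ls \<omega> \<and> \<not> E_cond \<omega>} \<le> 2 * real k / real p powr (1 + a)"
  proof -
  note P = assms(1)
  interpret prob_space M by (rule P)
  have p2: "p \<ge> 2" and n1: "n \<ge> 1" and sig: "\<sigma> > 0" and a0: "a > 0" and lmin: "lmin > 0"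
    using assms by auto
  have S0def: "S0 = {j. j < p \<and> beta j \<noteq> 0}" and cardk: "card S0 = k" and k1: "k \<ge> 1" using assms by auto
  have S0p: "S0 \<subseteq> {..<p}" using S0def by auto
  have finS: "finite S0" using S0p finite_subset by blast
  have beta0: "beta j = 0" if "j \<notin> S0" for j using that assms(6) S0def by (cases "j < p") auto
  obtain s where bij0: "bij_betw s {0..<card S0} S0" using ex_bij_betw_nat_finite[OF finS] by blast
  have bij: "bij_betw s {..<k} S0" using bij0 cardk by (simp add: atLeast0LessThan)
  have sp: "s r < p" if "r < k" for r using bij that S0p by (auto simp: bij_betw_def)
  have sS: "s r \<in> S0" if "r < k" for r using bij that by (auto simp: bij_betw_def)
  have Ss: "\<exists>r<k. j = s r" if "j \<in> S0" for j using bij that by (auto simp: bij_betw_def)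
  define V where "V = 1 / (real n * lmin)"
  define t where "t = \<sigma> * (1 / sqrt lmin) * sqrt (2 * (1 + a) * ln (real p)) / sqrt (real n)"
  have Vpos: "V > 0" unfolding V_def using n1 lmin by simp
  have lp: "ln (real p) > 0" using p2 by simp
  have tpos: "t > 0" unfolding t_def using sig lmin lp a0 n1 by simp
  have q: "exp (- t\<^sup>2 / (2 * \<sigma>\<^sup>2 * V)) = 1 / real p powr (1 + a)"
    unfolding t_def V_def using numeric[OF p2 n1 a0 sig lmin] by simp
  define I where "I = (({..<n} \<times> {..<p}) <+> {..<n})"
  have indep: "indep_vars (\<lambda>_. borel) (\<lambda>i. case i of Inl (l, j) \<Rightarrow> X l j | Inr l \<Rightarrow> eps l) I"
    using assms(10) unfolding I_def .
  have rvX: "X l j \<in> borel_measurable M" if "l < n" "j < p" for l j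
  proof -
    have "Inl (l,j) \<in> I" using that unfolding I_def by auto
    then show ?thesis using indep unfolding indep_vars_def by fastforce
  qed
  have rve: "eps l \<in> borel_measurable M" if "l < n" for l
  proof -
    have "Inr l \<in> I" using that unfolding I_def by auto
    then show ?thesis using indep unfolding indep_vars_def by fastforce
  qed
  define fX where "fX = (\<lambda>\<omega> l j. if l < n \<and> j < p then X l j \<omega> else 0)"
  have fXm: "(\<lambda>\<omega>. fX \<omega> l j) \<in> borel_measurable M" for l j
    unfolding fX_def using rvX by (cases "l < n \<and> j < p") auto
  have wvX: "wv n s k (\<lambda>l j. X l j \<omega>) i l = wv n s k (fX \<omega>) i l" if "l < n" for \<omega> i l
    using that sp by (intro wv_cong) (auto simp: fX_def)
  define Bp where "Bp = (\<lambda>i. {\<omega>\<in>space M. (\<Sum>l<n. (wv n s k (\<lambda>l j. X l j \<omega>) i l)\<^sup>2) \<le> V \<and>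
           t < (\<Sum>l<n. wv n s k (\<lambda>l j. X l j \<omega>) i l * eps l \<omega>)})"
  define Bm where "Bm = (\<lambda>i. {\<omega>\<in>space M. (\<Sum>l<n. (- wv n s k (\<lambda>l j. X l j \<omega>) i l)\<^sup>2) \<le> V \<and>
           t < (\<Sum>l<n. - wv n s k (\<lambda>l j. X l j \<omega>) i l * eps l \<omega>)})"
  have wm: "(\<lambda>z. wv n s k (\<lambda>l j. z (Inl (l,j))) i l) \<in> borel_measurable (PiM I (\<lambda>_. borel))"
    if "i < k" "l < n" for i l
  proof -
    define g where "g = (\<lambda>z::(nat\<times>nat)+nat \<Rightarrow> real. \<lambda>l j. if l < n \<and> j < p then z (Inl (l,j)) else 0)"
    have "(\<lambda>z. wv n s k (\<lambda>l j. z (Inl (l,j))) i l) = (\<lambda>z. wv n s k (g z) i l)"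
      using that sp by (intro ext wv_cong) (auto simp: g_def)
    moreover have "(\<lambda>z. wv n s k (g z) i l) \<in> borel_measurable (PiM I (\<lambda>_. borel))"
    proof (rule wv_meas[OF _ that(1)])
      fix l' j
      show "(\<lambda>z. g z l' j) \<in> borel_measurable (PiM I (\<lambda>_. borel))"
      proof (cases "l' < n \<and> j < p")
        case True
        then have "Inl (l',j) \<in> I" unfolding I_def by auto
        then show ?thesis using True unfolding g_def by simp
      next
        case False
        then have "(\<lambda>z. g z l' j) = (\<lambda>z. 0)" unfolding g_def by auto
        then show ?thesis by simp
      qed
    qed
    ultimately show ?thesis by simp
  qed
  have Bpb: "emeasure M (Bp i) \<le> ennreal (1 / real p powr (1 + a))" if ik: "i < k" for i
  proof -
    have "emeasure M (Bp i) \<le> ennreal (exp (- t\<^sup>2 / (2 * \<sigma>\<^sup>2 * V)))"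
      unfolding Bp_def
    proof (rule chernoff[OF P n1 assms(10) assms(14) _ _ Vpos tpos sig])
      show "\<And>l. l < n \<Longrightarrow> (\<lambda>z. wv n s k (\<lambda>l j. z (Inl (l, j))) i l) \<in> borel_measurable (PiM (({..<n} \<times> {..<p}) <+> {..<n}) (\<lambda>_. borel))"
        using wm[OF ik] unfolding I_def .
      show "\<And>x x' l. l < n \<Longrightarrow> (\<And>l' j. l' < n \<Longrightarrow> j < p \<Longrightarrow> x l' j = x' l' j) \<Longrightarrow> wv n s k x i l = wv n s k x' i l"
        by (rule wv_cong[where p=p]) (auto intro: sp)
    qed
    then show ?thesis using q by simp
  qed
  have Bmb: "emeasure M (Bm i) \<le> ennreal (1 / real p powr (1 + a))" if ik: "i < k" for i
  proof -
    have "emeasure M (Bm i) \<le> ennreal (exp (- t\<^sup>2 / (2 * \<sigma>\<^sup>2 * V)))"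
      unfolding Bm_def
    proof (rule chernoff[OF P n1 assms(10) assms(14) _ _ Vpos tpos sig, where w="\<lambda>x l. - wv n s k x i l"])
      show "\<And>l. l < n \<Longrightarrow> (\<lambda>z. - wv n s k (\<lambda>l j. z (Inl (l, j))) i l) \<in> borel_measurable (PiM (({..<n} \<times> {..<p}) <+> {..<n}) (\<lambda>_. borel))"
        using wm[OF ik] unfolding I_def by (intro borel_measurable_uminus)
      show "\<And>x x' l. l < n \<Longrightarrow> (\<And>l' j. l' < n \<Longrightarrow> j < p \<Longrightarrow> x l' j = x' l' j) \<Longrightarrow> - wv n s k x i l = - wv n s k x' i l"
        by (simp only: neg_equal_iff_equal) (rule wv_cong[where p=p], auto intro: sp)
    qed
    then show ?thesis using q by simp
  qed
  have wfm: "(\<lambda>\<omega>. wv n s k (fX \<omega>) i l) \<in> borel_measurable M" if "i < k" for i l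
    by (rule wv_meas[OF fXm that])
  have Bpm: "Bp i \<in> sets M" if ik: "i < k" for i
  proof -
    have "Bp i = {\<omega>\<in>space M. (\<Sum>l<n. (wv n s k (fX \<omega>) i l)\<^sup>2) \<le> V} \<inter>
                 {\<omega>\<in>space M. t < (\<Sum>l<n. wv n s k (fX \<omega>) i l * eps l \<omega>)}"
      unfolding Bp_def using wvX by auto
    also have "\<dots> \<in> sets M"
      using wfm[OF ik] rve
      by (intro sets.Int borel_measurable_le borel_measurable_less borel_measurable_sum
          borel_measurable_power borel_measurable_times borel_measurable_const) auto
    finally show ?thesis .
  qed
  have Bmm: "Bm i \<in> sets M" if ik: "i < k" for i
  proof -
    have "Bm i = {\<omega>\<in>space M. (\<Sum>l<n. (- wv n s k (fX \<omega>) i l)\<^sup>2) \<le> V} \<inter>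
                 {\<omega>\<in>space M. t < (\<Sum>l<n. - wv n s k (fX \<omega>) i l * eps l \<omega>)}"
      unfolding Bm_def using wvX by auto
    also have "\<dots> \<in> sets M"
      using wfm[OF ik] rve
      by (intro sets.Int borel_measurable_le borel_measurable_less borel_measurable_sum
          borel_measurable_power borel_measurable_times borel_measurable_const borel_measurable_uminus) auto
    finally show ?thesis .
  qed
  define U where "U = (\<Union>i<k. Bp i \<union> Bm i)"
  have Um: "U \<in> sets M" unfolding U_def using Bpm Bmm by auto
  have mB: "measure M (Bp i) \<le> 1 / real p powr (1 + a)" "measure M (Bm i) \<le> 1 / real p powr (1 + a)"
    if "i < k" for i
    using Bpb[OF that] Bmb[OF that] by (simp_all add: emeasure_eq_measure)
  have mU: "measure M U \<le> 2 * real k / real p powr (1 + a)"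
  proof -
    have "measure M U \<le> (\<Sum>i<k. measure M (Bp i \<union> Bm i))"
      unfolding U_def using Bpm Bmm by (intro finite_measure_subadditive_finite) auto
    also have "\<dots> \<le> (\<Sum>i<k. 2 * (1 / real p powr (1 + a)))"
    proof (rule sum_mono)
      fix i assume "i \<in> {..<k}"
      then have ik: "i < k" by simp
      have "measure M (Bp i \<union> Bm i) \<le> measure M (Bp i) + measure M (Bm i)"
        using Bpm[OF ik] Bmm[OF ik] by (rule measure_Un_le)
      then show "measure M (Bp i \<union> Bm i) \<le> 2 * (1 / real p powr (1 + a))" using mB[OF ik] by linarith
    qed
    also have "\<dots> = 2 * real k / real p powr (1 + a)" by simp
    finally show ?thesis .
  qed
  have key: "\<omega> \<in> U" if om: "\<omega> \<in> space M"
    and els: "t < Max ((\<lambda>j. \<bar>ls_coef n S0 (\<lambda>l j. X l j \<omega>) (\<lambda>l. (\<Sum>j<p. X l j \<omega> * beta j) + eps l \<omega>) j - beta j\<bar>) ` S0)"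
    and eig: "\<And>\<mu>. eigenvalue_on S0 (\<lambda>i j. (\<Sum>l<n. X l i \<omega> * X l j \<omega>) / real n) \<mu> \<Longrightarrow> lmin \<le> \<mu>"
    for \<omega>
  proof -
    have "S0 \<noteq> {}" using cardk k1 by auto
    then obtain j where j: "j \<in> S0" "t < \<bar>ls_coef n S0 (\<lambda>l j. X l j \<omega>) (\<lambda>l. (\<Sum>j<p. X l j \<omega> * beta j) + eps l \<omega>) j - beta j\<bar>"
      using els finS by (auto simp: Max_gr_iff)
    then obtain i where i: "i < k" "j = s i" using Ss by blast
    have diff: "ls_coef n S0 (\<lambda>l j. X l j \<omega>) (\<lambda>l. (\<Sum>j<p. X l j \<omega> * beta j) + eps l \<omega>) (s i) - beta (s i)
        = (\<Sum>l<n. wv n s k (\<lambda>l j. X l j \<omega>) i l * eps l \<omega>)" 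
      by (rule good_event(3)[OF n1 lmin bij S0p]) (auto intro: beta0 eig simp: i(1))
    have nrm: "(\<Sum>l<n. (wv n s k (\<lambda>l j. X l j \<omega>) i l)\<^sup>2) \<le> V" unfolding V_def
      by (rule good_event(2)[OF n1 lmin bij S0p]) (auto intro: beta0 eig simp: i(1))
    have "t < \<bar>\<Sum>l<n. wv n s k (\<lambda>l j. X l j \<omega>) i l * eps l \<omega>\<bar>" using j(2) i(2) diff by simp
    then have "\<omega> \<in> Bp i \<or> \<omega> \<in> Bm i"
      unfolding Bp_def Bm_def using om nrm by (auto simp: sum_negf)
    then show ?thesis unfolding U_def using i by auto
  qed
  show ?thesis unfolding Let_def
  proof -
    let ?A = "{\<omega> \<in> space M. \<sigma> * (1 / sqrt lmin) * sqrt (2 * (1 + a) * ln (real p)) / sqrt (real n)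
        < Max ((\<lambda>j. \<bar>ls_coef n S0 (\<lambda>l j. X l j \<omega>) (\<lambda>l. (\<Sum>j<p. X l j \<omega> * beta j) + eps l \<omega>) j - beta j\<bar>) ` S0) \<and>
        \<not> ((\<exists>\<mu>. eigenvalue_on S0 (\<lambda>i j. (\<Sum>l<n. X l i \<omega> * X l j \<omega>) / real n) \<mu> \<and> (\<mu> < lmin \<or> lmax < \<mu>)) \<or>
           \<sigma>\<^sup>2 * lam < (\<Sum>l<n. (eps l \<omega>)\<^sup>2) / real n)}"
    have sub: "?A \<subseteq> U"
    proof
      fix \<omega> assume "\<omega> \<in> ?A"
      then show "\<omega> \<in> U" by (intro key[of \<omega>]) (auto simp: t_def not_less)
    qed
    have "measure M ?A \<le> measure M U"
    proof (cases "?A \<in> sets M")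
      case True then show ?thesis using sub Um by (intro finite_measure_mono)
    next
      case False then show ?thesis by (simp add: measure_notin_sets)
    qed
    then show "measure M ?A \<le> 2 * real k / real p powr (1 + a)" using mU by linarith
  qed
qed

end
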